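(* Let $V$ be a finite nonempty set of voters and $A$ a finite set of alternatives with $|A|\ge 4$. Let $F:\mathcal{P}(V,A)\to S_2(A)$ be a consular election rule that is Marian, satisfies SPO and SPP, and is weakly viable. Then $F$ has a weak dictator, i.e. a voter $i$ such that for every profile $P$, the top-ranked alternative of $P_i$ belongs to $F(P)$.
   Context: A profile assigns to each voter $i\in V$ a linear order $P_i$ on $A$; $P_i'P_{-i}$ replaces voter $i$'s order by $P_i'$. $S_2(A)$ is the set of 2-element subsets of $A$; a consular election rule is a map $F:\mathcal{P}(V,A)\to S_2(A)$. $\mathrm{best}(P_i,W)$, $\mathrm{worst}(P_i,W)$ denote the $P_i$-best and $P_i$-worst elements of nonempty $W\subseteq A$. SPO: for all profiles $P$, voters $i$ and linear orders $P_i'$, $\mathrm{best}(P_i,F(P))\succeq_i\mathrm{best}(P_i,F(P_i'P_{-i}))$; SPP: same with $\mathrm{worst}$. Weakly viable: every $a\in A$ lies in $F(P)$ for some $P$. $F$ is Marian if there is $m\in A$ with $m\in F(P)$ for every profile $P$. *)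

theory Defs
  imports Main "HOL-Library.FuncSet"
begin

text \<open>A linear order on A is a relation r \<subseteq> A \<times> A; (x,y) \<in> r means "x is ranked weakly above y".\<close>

definition lin_orders :: "'a set \<Rightarrow> ('a \<times> 'a) set set" where
  "lin_orders A = {r. linear_order_on A r \<and> r \<subseteq> A \<times> A}"

definition profiles :: "'v set \<Rightarrow> 'a set \<Rightarrow> ('v \<Rightarrow> ('a \<times> 'a) set) set" where
  "profiles V A = V \<rightarrow>\<^sub>E lin_orders A"

definition best :: "('a \<times> 'a) set \<Rightarrow> 'a set \<Rightarrow> 'a" where
  "best r W = (THE x. x \<in> W \<and> (\<forall>y\<in>W. (x, y) \<in> r))"

definition worst :: "('a \<times> 'a) set \<Rightarrow> 'a set \<Rightarrow> 'a" where
  "worst r W = (THE x. x \<in> W \<and> (\<forall>y\<in>W. (y, x) \<in> r))"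

definition consular_rule :: "'v set \<Rightarrow> 'a set \<Rightarrow> (('v \<Rightarrow> ('a \<times> 'a) set) \<Rightarrow> 'a set) \<Rightarrow> bool" where
  "consular_rule V A F = (\<forall>P\<in>profiles V A. F P \<subseteq> A \<and> card (F P) = 2)"

definition SPO :: "'v set \<Rightarrow> 'a set \<Rightarrow> (('v \<Rightarrow> ('a \<times> 'a) set) \<Rightarrow> 'a set) \<Rightarrow> bool" where
  "SPO V A F = (\<forall>P\<in>profiles V A. \<forall>i\<in>V. \<forall>r'\<in>lin_orders A.
      (best (P i) (F P), best (P i) (F (P(i := r')))) \<in> P i)"

definition SPP :: "'v set \<Rightarrow> 'a set \<Rightarrow> (('v \<Rightarrow> ('a \<times> 'a) set) \<Rightarrow> 'a set) \<Rightarrow> bool" where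
  "SPP V A F = (\<forall>P\<in>profiles V A. \<forall>i\<in>V. \<forall>r'\<in>lin_orders A.
      (worst (P i) (F P), worst (P i) (F (P(i := r')))) \<in> P i)"

definition weakly_viable :: "'v set \<Rightarrow> 'a set \<Rightarrow> (('v \<Rightarrow> ('a \<times> 'a) set) \<Rightarrow> 'a set) \<Rightarrow> bool" where
  "weakly_viable V A F = (\<forall>a\<in>A. \<exists>P\<in>profiles V A. a \<in> F P)"

definition marian :: "'v set \<Rightarrow> 'a set \<Rightarrow> (('v \<Rightarrow> ('a \<times> 'a) set) \<Rightarrow> 'a set) \<Rightarrow> bool" where
  "marian V A F = (\<exists>m\<in>A. \<forall>P\<in>profiles V A. m \<in> F P)"

definition weak_dictator :: "'v set \<Rightarrow> 'a set \<Rightarrow> (('v \<Rightarrow> ('a \<times> 'a) set) \<Rightarrow> 'a set) \<Rightarrow> 'v \<Rightarrow> bool" where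
  "weak_dictator V A F i = (i \<in> V \<and> (\<forall>P\<in>profiles V A. best (P i) A \<in> F P))"

end

theory Submission
  imports Defs
begin

lemma lin_ordersD:
  assumes "r \<in> lin_orders A"
  shows "r \<subseteq> A \<times> A" "\<And>x. x \<in> A \<Longrightarrow> (x,x) \<in> r"
    "\<And>x y z. (x,y) \<in> r \<Longrightarrow> (y,z) \<in> r \<Longrightarrow> (x,z) \<in> r"
    "\<And>x y. (x,y) \<in> r \<Longrightarrow> (y,x) \<in> r \<Longrightarrow> x = y"
    "\<And>x y. x \<in> A \<Longrightarrow> y \<in> A \<Longrightarrow> (x,y) \<in> r \<or> (y,x) \<in> r"
proof -
  have lo: "linear_order_on A r" and sub: "r \<subseteq> A \<times> A" using assms unfolding lin_orders_def by auto
  have rf: "refl_on A r" and tr: "trans r" and an: "antisym r" and tot: "total_on A r"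
    using lo unfolding linear_order_on_def partial_order_on_def preorder_on_def by auto
  show "r \<subseteq> A \<times> A" by (rule sub)
  show "\<And>x. x \<in> A \<Longrightarrow> (x,x) \<in> r" using rf unfolding refl_on_def by blast
  show "\<And>x y z. (x,y) \<in> r \<Longrightarrow> (y,z) \<in> r \<Longrightarrow> (x,z) \<in> r" using tr by (rule transD)
  show "\<And>x y. (x,y) \<in> r \<Longrightarrow> (y,x) \<in> r \<Longrightarrow> x = y" using an by (rule antisymD)
  show "\<And>x y. x \<in> A \<Longrightarrow> y \<in> A \<Longrightarrow> (x,y) \<in> r \<or> (y,x) \<in> r"
  proof -
    fix x y assume "x \<in> A" "y \<in> A"
    then show "(x,y) \<in> r \<or> (y,x) \<in> r"
      using tot rf unfolding total_on_def refl_on_def by (cases "x = y") auto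
  qed
qed

lemma lin_ordersI:
  assumes "r \<subseteq> A \<times> A" "\<And>x. x \<in> A \<Longrightarrow> (x,x) \<in> r"
    "\<And>x y z. (x,y) \<in> r \<Longrightarrow> (y,z) \<in> r \<Longrightarrow> (x,z) \<in> r"
    "\<And>x y. (x,y) \<in> r \<Longrightarrow> (y,x) \<in> r \<Longrightarrow> x = y"
    "\<And>x y. x \<in> A \<Longrightarrow> y \<in> A \<Longrightarrow> x \<noteq> y \<Longrightarrow> (x,y) \<in> r \<or> (y,x) \<in> r"
  shows "r \<in> lin_orders A"
proof -
  have "refl_on A r" unfolding refl_on_def using assms(2) by blast
  moreover have "trans r" by (rule transI) (rule assms(3))
  moreover have "antisym r" by (rule antisymI) (rule assms(4))
  moreover have "total_on A r" unfolding total_on_def using assms(5) by blast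
  ultimately show ?thesis using assms(1)
    unfolding lin_orders_def linear_order_on_def partial_order_on_def preorder_on_def by blast
qed


definition ltop :: "'a set \<Rightarrow> 'a \<Rightarrow> ('a \<times> 'a) set \<Rightarrow> ('a \<times> 'a) set" where
  "ltop A x r = {p \<in> r. fst p \<noteq> x \<and> snd p \<noteq> x} \<union> {(x,v) | v. v \<in> A}"

lemma ltop_mem: "(u,v) \<in> ltop A x r \<longleftrightarrow> (u = x \<and> v \<in> A) \<or> (u \<noteq> x \<and> v \<noteq> x \<and> (u,v) \<in> r)"
  unfolding ltop_def by auto

lemma ltop_lin: assumes r: "r \<in> lin_orders A" and x: "x \<in> A" shows "ltop A x r \<in> lin_orders A"
proof (rule lin_ordersI)
  note D = lin_ordersD[OF r]
  show "ltop A x r \<subseteq> A \<times> A"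
  proof
    fix p assume "p \<in> ltop A x r"
    then obtain u v where p: "p = (u,v)" "(u,v) \<in> ltop A x r" by (cases p) auto
    then show "p \<in> A \<times> A" using D(1) x unfolding ltop_mem by blast
  qed
  show "\<And>y. y \<in> A \<Longrightarrow> (y,y) \<in> ltop A x r" unfolding ltop_mem using D(2) by blast
  show "\<And>u v w. (u,v) \<in> ltop A x r \<Longrightarrow> (v,w) \<in> ltop A x r \<Longrightarrow> (u,w) \<in> ltop A x r"
  proof -
    fix u v w assume 1: "(u,v) \<in> ltop A x r" and 2: "(v,w) \<in> ltop A x r"
    show "(u,w) \<in> ltop A x r"
    proof (cases "u = x")
      case True then show ?thesis using 2 D(1) x unfolding ltop_mem by blast
    next
      case False
      then have "v \<noteq> x" "(u,v) \<in> r" using 1 unfolding ltop_mem by auto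
      then have "w \<noteq> x" "(v,w) \<in> r" using 2 unfolding ltop_mem by auto
      then show ?thesis using False \<open>(u,v) \<in> r\<close> D(3) unfolding ltop_mem by blast
    qed
  qed
  show "\<And>u v. (u,v) \<in> ltop A x r \<Longrightarrow> (v,u) \<in> ltop A x r \<Longrightarrow> u = v"
    unfolding ltop_mem using D(4) by blast
  show "\<And>u v. u \<in> A \<Longrightarrow> v \<in> A \<Longrightarrow> u \<noteq> v \<Longrightarrow> (u,v) \<in> ltop A x r \<or> (v,u) \<in> ltop A x r"
    unfolding ltop_mem using D(5) by blast
qed

lemma best_pair: assumes r: "r \<in> lin_orders A" and "x \<in> A" "y \<in> A" "(x,y) \<in> r"
  shows "best r {x,y} = x"
  unfolding best_def
proof (rule the_equality)
  show "x \<in> {x, y} \<and> (\<forall>z\<in>{x, y}. (x, z) \<in> r)" using assms lin_ordersD(2)[OF r] by auto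
  fix z assume "z \<in> {x, y} \<and> (\<forall>w\<in>{x, y}. (z, w) \<in> r)"
  then show "z = x" using lin_ordersD(4)[OF r] assms(4) by blast
qed

lemma worst_pair: assumes r: "r \<in> lin_orders A" and "x \<in> A" "y \<in> A" "(x,y) \<in> r"
  shows "worst r {x,y} = y"
  unfolding worst_def
proof (rule the_equality)
  show "y \<in> {x, y} \<and> (\<forall>z\<in>{x, y}. (z, y) \<in> r)" using assms lin_ordersD(2)[OF r] by auto
  fix z assume "z \<in> {x, y} \<and> (\<forall>w\<in>{x, y}. (w, z) \<in> r)"
  then show "z = y" using lin_ordersD(4)[OF r] assms(4) by blast
qed

lemma best_ex: assumes "r \<in> lin_orders A" "finite W" "W \<noteq> {}" "W \<subseteq> A"
  shows "best r W \<in> W \<and> (\<forall>y\<in>W. (best r W, y) \<in> r)"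
proof -
  have "\<exists>x\<in>W. \<forall>y\<in>W. (x,y) \<in> r" using assms(2,3,4)
  proof (induction W rule: finite_ne_induct)
    case (singleton x) then show ?case using lin_ordersD(2)[OF assms(1)] by auto
  next
    case (insert x F)
    then obtain z where z: "z \<in> F" "\<forall>y\<in>F. (z,y) \<in> r" by auto
    show ?case
    proof (cases "(x,z) \<in> r")
      case True then show ?thesis using z lin_ordersD(2,3)[OF assms(1)] insert.prems by blast
    next
      case False then have "(z,x) \<in> r" using lin_ordersD(5)[OF assms(1)] insert.prems z by blast
      then show ?thesis using z by blast
    qed
  qed
  then obtain x where x: "x \<in> W" "\<forall>y\<in>W. (x,y) \<in> r" by auto
  have "best r W = x" unfolding best_def
    using x lin_ordersD(4)[OF assms(1)] by (intro the_equality) auto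
  then show ?thesis using x by simp
qed


lemma prof_mem: "P \<in> profiles V A \<longleftrightarrow> (\<forall>i\<in>V. P i \<in> lin_orders A) \<and> (\<forall>i. i \<notin> V \<longrightarrow> P i = undefined)"
  unfolding profiles_def PiE_def extensional_def Pi_def by auto

definition top3 :: "'a set \<Rightarrow> 'a \<Rightarrow> 'a \<Rightarrow> 'a \<Rightarrow> ('a \<times> 'a) set \<Rightarrow> ('a \<times> 'a) set" where
  "top3 A x y z r = ltop A x (ltop A y (ltop A z r))"

lemma top3_lin: "r \<in> lin_orders A \<Longrightarrow> x \<in> A \<Longrightarrow> y \<in> A \<Longrightarrow> z \<in> A \<Longrightarrow> top3 A x y z r \<in> lin_orders A"
  unfolding top3_def by (intro ltop_lin) auto

locale gs =
  fixes V :: "'v set" and A :: "'a set" and B :: "'a set"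
    and g :: "('v \<Rightarrow> ('a \<times> 'a) set) \<Rightarrow> 'a"
  assumes finV: "finite V" and BA: "B \<subseteq> A"
    and gB: "\<And>P. P \<in> profiles V A \<Longrightarrow> g P \<in> B"
    and SP: "\<And>P i r'. P \<in> profiles V A \<Longrightarrow> i \<in> V \<Longrightarrow> r' \<in> lin_orders A \<Longrightarrow> (g P, g (P(i:=r'))) \<in> P i"
    and onto: "\<And>b. b \<in> B \<Longrightarrow> \<exists>P\<in>profiles V A. g P = b"
    and two: "\<exists>a b. a \<in> B \<and> b \<in> B \<and> a \<noteq> b"
    and third: "\<And>a b. a \<in> B \<Longrightarrow> b \<in> B \<Longrightarrow> \<exists>c\<in>B. c \<noteq> a \<and> c \<noteq> b"
begin

lemma MM1:
  assumes Q: "Q \<in> profiles V A" and i: "i \<in> V" and r: "r' \<in> lin_orders A" and x: "g Q = x"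
    and low: "\<forall>y\<in>B. (x,y) \<in> Q i \<longrightarrow> (x,y) \<in> r'"
  shows "g (Q(i:=r')) = x"
proof -
  let ?Q' = "Q(i:=r')"
  have Q': "?Q' \<in> profiles V A" using Q i r unfolding prof_mem by auto
  have "(x, g ?Q') \<in> Q i" using SP[OF Q i r] x by simp
  hence 1: "(x, g ?Q') \<in> r'" using low gB[OF Q'] by blast
  have Qi: "Q i \<in> lin_orders A" using Q i unfolding prof_mem by auto
  have "(g ?Q', g (?Q'(i := Q i))) \<in> ?Q' i" using SP[OF Q' i Qi] .
  hence "(g ?Q', x) \<in> r'" using x by simp
  with 1 show ?thesis using lin_ordersD(4)[OF r] by blast
qed

lemma MM:
  assumes P: "P \<in> profiles V A" and P': "P' \<in> profiles V A" and x: "g P = x"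
    and low: "\<forall>i\<in>V. \<forall>y\<in>B. (x,y) \<in> P i \<longrightarrow> (x,y) \<in> P' i"
  shows "g P' = x"
proof -
  have "finite S \<Longrightarrow> S \<subseteq> V \<Longrightarrow> g (\<lambda>j. if j \<in> S then P' j else P j) = x" for S
  proof (induction S rule: finite_induct)
    case empty then show ?case using x by simp
  next
    case (insert j S)
    let ?H = "\<lambda>j. if j \<in> S then P' j else P j"
    have H: "?H \<in> profiles V A" using P P' insert.prems unfolding prof_mem by auto
    have eq: "(\<lambda>k. if k \<in> insert j S then P' k else P k) = ?H(j := P' j)" by (auto simp: fun_eq_iff)
    have "g (?H(j := P' j)) = x"
      apply (rule MM1[OF H])
      using insert P' low unfolding prof_mem by auto
    then show ?case using eq by simp
  qed
  from this[OF finV] have "g (\<lambda>j. if j \<in> V then P' j else P j) = x" by blast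
  moreover have "(\<lambda>j. if j \<in> V then P' j else P j) = P'" using P P' unfolding prof_mem by (auto simp: fun_eq_iff)
  ultimately show ?thesis by simp
qed

definition Dec :: "'v set \<Rightarrow> 'a \<Rightarrow> 'a \<Rightarrow> bool" where
  "Dec S a b = (\<forall>P\<in>profiles V A. (\<forall>i\<in>S. (a,b) \<in> P i) \<longrightarrow> g P \<noteq> b)"

lemma Dlem:
  assumes a: "a \<in> B" and b: "b \<in> B" and ab: "a \<noteq> b" and Q: "Q \<in> profiles V A"
    and ga: "g Q = a" and oth: "\<forall>i\<in>V-S. (b,a) \<in> Q i"
  shows "Dec S a b"
  unfolding Dec_def
proof (intro ballI impI notI)
  fix P assume P: "P \<in> profiles V A" and PS: "\<forall>i\<in>S. (a,b) \<in> P i" and gb: "g P = b"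
  have aA: "a \<in> A" and bA: "b \<in> A" using a b BA by auto
  define R where "R = (\<lambda>i\<in>V. if (a,b) \<in> P i then ltop A a (ltop A b (P i)) else ltop A b (ltop A a (P i)))"
  have R: "R \<in> profiles V A" using P aA bA unfolding prof_mem R_def by (auto intro!: ltop_lin)
  have "g R = b"
  proof (rule MM[OF P R gb], intro ballI impI)
    fix i y assume i: "i \<in> V" and y: "y \<in> B" and by': "(b,y) \<in> P i"
    have Pi: "P i \<in> lin_orders A" using P i unfolding prof_mem by auto
    show "(b,y) \<in> R i" using lin_ordersD(4)[OF Pi] ab by' y BA i unfolding R_def by (auto simp: ltop_mem)
  qed
  moreover have "g R = a"
  proof (rule MM[OF Q R ga], intro ballI impI)
    fix i y assume i: "i \<in> V" and y: "y \<in> B" and ay: "(a,y) \<in> Q i"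
    have Qi: "Q i \<in> lin_orders A" using Q i unfolding prof_mem by auto
    show "(a,y) \<in> R i"
    proof (cases "(a,b) \<in> P i")
      case True then show ?thesis using i y BA unfolding R_def by (auto simp: ltop_mem)
    next
      case False
      then have "i \<in> V - S" using PS i by auto
      then have "(b,a) \<in> Q i" using oth by auto
      then have "y \<noteq> b" using ay ab lin_ordersD(4)[OF Qi] by auto
      then show ?thesis using False i y BA unfolding R_def by (auto simp: ltop_mem)
    qed
  qed
  ultimately show False using ab by simp
qed

lemma pareto: assumes "x \<in> B" "y \<in> B" "x \<noteq> y" shows "Dec V x y"
proof -
  obtain Q where "Q \<in> profiles V A" "g Q = x" using onto assms(1) by auto
  then show ?thesis using Dlem[OF assms] by auto
qed

lemma some_prof: "\<exists>P. P \<in> profiles V A"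
  using two onto by blast

lemma exp1:
  assumes D: "Dec S a b" and SV: "S \<subseteq> V" and a: "a \<in> B" and b: "b \<in> B" and c: "c \<in> B"
    and d: "a \<noteq> b" "a \<noteq> c" "b \<noteq> c"
  shows "Dec S a c"
proof -
  obtain P0 where P0: "P0 \<in> profiles V A" using some_prof by auto
  have A3: "a \<in> A" "b \<in> A" "c \<in> A" using a b c BA by auto
  define Q where "Q = (\<lambda>i\<in>V. if i \<in> S then top3 A a b c (P0 i) else top3 A b c a (P0 i))"
  have Q: "Q \<in> profiles V A" using P0 A3 unfolding prof_mem Q_def by (auto intro!: top3_lin)
  have "g Q = a"
  proof (rule ccontr)
    assume ne: "g Q \<noteq> a"
    have y: "g Q \<in> B" using gB[OF Q] .
    show False
    proof (cases "g Q = b")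
      case True
      have "\<forall>i\<in>S. (a,b) \<in> Q i" using SV A3 d unfolding Q_def top3_def by (auto simp: ltop_mem)
      then show False using D Q True unfolding Dec_def by auto
    next
      case False
      have "\<forall>i\<in>V. (b, g Q) \<in> Q i" using A3 d y BA ne False unfolding Q_def top3_def by (auto simp: ltop_mem)
      then show False using pareto[OF b y] False Q unfolding Dec_def by auto
    qed
  qed
  moreover have "\<forall>i\<in>V-S. (c,a) \<in> Q i" using A3 d unfolding Q_def top3_def by (auto simp: ltop_mem)
  ultimately show ?thesis using Dlem[OF a c d(2) Q] by auto
qed

lemma exp2:
  assumes D: "Dec S a b" and SV: "S \<subseteq> V" and a: "a \<in> B" and b: "b \<in> B" and c: "c \<in> B"
    and d: "a \<noteq> b" "a \<noteq> c" "b \<noteq> c"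
  shows "Dec S c b"
proof -
  obtain P0 where P0: "P0 \<in> profiles V A" using some_prof by auto
  have A3: "a \<in> A" "b \<in> A" "c \<in> A" using a b c BA by auto
  define Q where "Q = (\<lambda>i\<in>V. if i \<in> S then top3 A c a b (P0 i) else top3 A b c a (P0 i))"
  have Q: "Q \<in> profiles V A" using P0 A3 unfolding prof_mem Q_def by (auto intro!: top3_lin)
  have "g Q = c"
  proof (rule ccontr)
    assume ne: "g Q \<noteq> c"
    have y: "g Q \<in> B" using gB[OF Q] .
    show False
    proof (cases "g Q = b")
      case True
      have "\<forall>i\<in>S. (a,b) \<in> Q i" using SV A3 d unfolding Q_def top3_def by (auto simp: ltop_mem)
      then show False using D Q True unfolding Dec_def by auto
    next
      case False
      have "\<forall>i\<in>V. (c, g Q) \<in> Q i" using A3 d y BA ne False unfolding Q_def top3_def by (auto simp: ltop_mem)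
      then show False using pareto[OF c y] ne Q unfolding Dec_def by auto
    qed
  qed
  moreover have "\<forall>i\<in>V-S. (b,c) \<in> Q i" using A3 d unfolding Q_def top3_def by (auto simp: ltop_mem)
  ultimately show ?thesis using Dlem[OF c b] d Q by auto
qed

definition Dall :: "'v set \<Rightarrow> bool" where
  "Dall S = (\<forall>x\<in>B. \<forall>y\<in>B. x \<noteq> y \<longrightarrow> Dec S x y)"

lemma expand:
  assumes D: "Dec S a b" and SV: "S \<subseteq> V" and a: "a \<in> B" and b: "b \<in> B" and ab: "a \<noteq> b"
  shows "Dall S"
  unfolding Dall_def
proof (intro ballI impI)
  fix x y assume x: "x \<in> B" and y: "y \<in> B" and xy: "x \<noteq> y"
  have ay: "Dec S a z" if "z \<noteq> a" "z \<in> B" for z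
    using that exp1[OF D SV a b, of z] ab D by (cases "z = b") auto
  show "Dec S x y"
  proof (cases "y = a")
    case False
    then have D1: "Dec S a y" using ay y by auto
    show ?thesis using exp2[OF D1 SV a y x] False xy D1 by (cases "x = a") auto
  next
    case True
    show ?thesis
    proof (cases "x = b")
      case False
      have "Dec S x b" using exp2[OF D SV a b x] False xy True ab by auto
      then show ?thesis using exp1[OF _ SV x b y] False xy True ab by auto
    next
      case xb: True
      obtain c where c: "c \<in> B" "c \<noteq> a" "c \<noteq> b" using third[OF a b] by auto
      have "Dec S a c" using ay c by auto
      then have "Dec S b c" using exp2[OF _ SV a c(1) b] c ab by auto
      then show ?thesis using exp1[OF _ SV b c(1) a] c ab xb True by auto
    qed
  qed
qed

lemma contraction:
  assumes D: "Dall (S1 \<union> S2)" and SV: "S1 \<union> S2 \<subseteq> V"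
  shows "Dall S1 \<or> Dall S2"
proof -
  obtain a b where ab: "a \<in> B" "b \<in> B" "a \<noteq> b" using two by auto
  obtain c where c: "c \<in> B" "c \<noteq> a" "c \<noteq> b" using third[OF ab(1,2)] by auto
  obtain P0 where P0: "P0 \<in> profiles V A" using some_prof by auto
  have A3: "a \<in> A" "b \<in> A" "c \<in> A" using ab c BA by auto
  define Q where "Q = (\<lambda>i\<in>V. if i \<in> S1 then top3 A a b c (P0 i) else
     if i \<in> S2 then top3 A c a b (P0 i) else top3 A b c a (P0 i))"
  have Q: "Q \<in> profiles V A" using P0 A3 unfolding prof_mem Q_def by (auto intro!: top3_lin)
  have y: "g Q \<in> B" using gB[OF Q] .
  have nb: "g Q \<noteq> b"
  proof
    assume gb: "g Q = b"
    have "\<forall>i\<in>S1 \<union> S2. (a,b) \<in> Q i" using SV A3 ab c unfolding Q_def top3_def by (auto simp: ltop_mem)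
    then show False using D ab Q gb unfolding Dall_def Dec_def by blast
  qed
  have "g Q = a \<or> g Q = c"
  proof (rule ccontr)
    assume ne: "\<not> (g Q = a \<or> g Q = c)"
    have "\<forall>i\<in>V. (a, g Q) \<in> Q i" using A3 ab c y BA ne nb unfolding Q_def top3_def by (auto simp: ltop_mem)
    then show False using pareto[OF ab(1) y] ne Q unfolding Dec_def by auto
  qed
  then show ?thesis
  proof
    assume ga: "g Q = a"
    have "\<forall>i\<in>V-S1. (c,a) \<in> Q i" using A3 ab c unfolding Q_def top3_def by (auto simp: ltop_mem)
    then have "Dec S1 a c" using Dlem[OF ab(1) c(1) _ Q ga] c by auto
    then show ?thesis using expand[of S1 a c] SV ab c by auto
  next
    assume gc: "g Q = c"
    have "\<forall>i\<in>V-S2. (b,c) \<in> Q i" using A3 ab c unfolding Q_def top3_def by (auto simp: ltop_mem)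
    then have "Dec S2 c b" using Dlem[OF c(1) ab(2) _ Q gc] c by auto
    then show ?thesis using expand[of S2 c b] SV ab c by auto
  qed
qed

lemma not_Dall_empty: "\<not> Dall {}"
proof
  assume D: "Dall {}"
  obtain a b where ab: "a \<in> B" "b \<in> B" "a \<noteq> b" using two by auto
  obtain P where "P \<in> profiles V A" "g P = b" using onto ab(2) by auto
  then show False using D ab unfolding Dall_def Dec_def by auto
qed

lemma dictator: "\<exists>i\<in>V. \<forall>P\<in>profiles V A. \<forall>y\<in>B. (g P, y) \<in> P i"
proof -
  have "finite S \<Longrightarrow> S \<subseteq> V \<Longrightarrow> Dall S \<Longrightarrow> \<exists>i\<in>S. Dall {i}" for S
  proof (induction S rule: finite_induct)
    case empty then show ?case using not_Dall_empty by simp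
  next
    case (insert x S)
    have "Dall {x} \<or> Dall S" using contraction[of "{x}" S] insert.prems by auto
    then show ?case using insert by auto
  qed
  moreover have "Dall V"
    unfolding Dall_def using pareto by auto
  ultimately obtain i where i: "i \<in> V" "Dall {i}" using finV by blast
  have "\<forall>P\<in>profiles V A. \<forall>y\<in>B. (g P, y) \<in> P i"
  proof (intro ballI)
    fix P y assume P: "P \<in> profiles V A" and y: "y \<in> B"
    have Pi: "P i \<in> lin_orders A" using P i unfolding prof_mem by auto
    have gP: "g P \<in> B" using gB[OF P] .
    show "(g P, y) \<in> P i"
    proof (cases "y = g P")
      case True then show ?thesis using lin_ordersD(2)[OF Pi] gP BA by auto
    next
      case False
      have "(y, g P) \<notin> P i"
        using i(2) False y gP P unfolding Dall_def Dec_def by auto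
      then show ?thesis using lin_ordersD(5)[OF Pi] y gP BA by auto
    qed
  qed
  then show ?thesis using i by auto
qed

end


theorem proposition17:
  fixes V :: "'v set" and A :: "'a set"
    and F :: "('v \<Rightarrow> ('a \<times> 'a) set) \<Rightarrow> 'a set"
  assumes "finite V" and "V \<noteq> {}" and "finite A" and "card A \<ge> 4"
    and "consular_rule V A F"
    and "marian V A F"
    and "SPO V A F" and "SPP V A F"
    and "weakly_viable V A F"
  shows "\<exists>i. weak_dictator V A F i"
proof -
  obtain m where m: "m \<in> A" "\<forall>P\<in>profiles V A. m \<in> F P" using assms(6) unfolding marian_def by auto
  define g where "g P = the_elem (F P - {m})" for P
  have FP: "F P = {m, g P} \<and> g P \<noteq> m \<and> g P \<in> A" if P: "P \<in> profiles V A" for P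
  proof -
    have sub: "F P \<subseteq> A" and c2: "card (F P) = 2" using assms(5) P unfolding consular_rule_def by auto
    obtain x y where xy: "F P = {x,y}" "x \<noteq> y" using c2 card_2_iff by metis
    have mF: "m \<in> F P" using m P by auto
    obtain z where z: "F P = {m, z}" "z \<noteq> m" using xy mF by auto
    have "F P - {m} = {z}" using z by auto
    then have "g P = z" unfolding g_def by simp
    then show ?thesis using z sub by auto
  qed
  define B where "B = A - {m}"
  have cB: "card B \<ge> 3" using assms(3,4) m(1) unfolding B_def by (simp add: card_Diff_singleton)
  have finB: "finite B" using assms(3) unfolding B_def by auto
  have third: "\<exists>c\<in>B. c \<noteq> a \<and> c \<noteq> b" if "a \<in> B" "b \<in> B" for a b
  proof -
    have "card B - card {a,b} \<le> card (B - {a,b})" by (rule diff_card_le_card_Diff) simp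
    moreover have "card {a,b} \<le> 2" by (simp add: card_insert_if)
    ultimately have "card (B - {a,b}) > 0" using cB by linarith
    then have "B - {a,b} \<noteq> {}" by (metis card.empty less_irrefl)
    then show ?thesis by auto
  qed
  have two: "\<exists>a b. a \<in> B \<and> b \<in> B \<and> a \<noteq> b"
  proof -
    have "B \<noteq> {}" using cB by auto
    then obtain a where "a \<in> B" by auto
    then show ?thesis using third[of a a] by blast
  qed
  have SPg: "(g P, g (P(i:=r'))) \<in> P i"
    if P: "P \<in> profiles V A" and i: "i \<in> V" and r: "r' \<in> lin_orders A" for P i r'
  proof -
    let ?Q = "P(i:=r')"
    have Q: "?Q \<in> profiles V A" using P i r unfolding prof_mem by auto
    have R: "P i \<in> lin_orders A" using P i unfolding prof_mem by auto
    note D = lin_ordersD[OF R]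
    obtain x where x: "x = g P" by auto
    obtain y where y: "y = g ?Q" by auto
    have Fx: "F P = {m, x}" "x \<noteq> m" "x \<in> A" using FP[OF P] x by auto
    have Fy: "F ?Q = {m, y}" "y \<noteq> m" "y \<in> A" using FP[OF Q] y by auto
    have so: "(best (P i) (F P), best (P i) (F ?Q)) \<in> P i"
      using assms(7) P i r unfolding SPO_def by auto
    have sp: "(worst (P i) (F P), worst (P i) (F ?Q)) \<in> P i"
      using assms(8) P i r unfolding SPP_def by auto
    have "(x, y) \<in> P i"
    proof (cases "x = y")
      case True then show ?thesis using D(2) Fx by auto
    next
      case False
      show ?thesis
      proof (cases "(m,x) \<in> P i")
        case True
        have w1: "worst (P i) (F P) = x" using worst_pair[OF R m(1) Fx(3) True] Fx by simp
        show ?thesis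
        proof (cases "(m,y) \<in> P i")
          case True
          then show ?thesis using worst_pair[OF R m(1) Fy(3) True] Fy sp w1 by simp
        next
          case False
          then have "(y,m) \<in> P i" using D(5) m(1) Fy by blast
          then have "worst (P i) (F ?Q) = m" using worst_pair[OF R Fy(3) m(1)] Fy by (simp add: insert_commute)
          then have "(x,m) \<in> P i" using sp w1 by simp
          then show ?thesis using True D(4) Fx by blast
        qed
      next
        case False
        then have xm: "(x,m) \<in> P i" using D(5) m(1) Fx by blast
        have b1: "best (P i) (F P) = x" using best_pair[OF R Fx(3) m(1) xm] Fx by (simp add: insert_commute)
        show ?thesis
        proof (cases "(y,m) \<in> P i")
          case True
          then show ?thesis using best_pair[OF R Fy(3) m(1) True] Fy so b1 by (simp add: insert_commute)
        next
          case False
          then have my: "(m,y) \<in> P i" using D(5) m(1) Fy by blast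
          then have "best (P i) (F ?Q) = m" using best_pair[OF R m(1) Fy(3)] Fy by simp
          then show ?thesis using xm my D(3) by blast
        qed
      qed
    qed
    then show ?thesis using x y by simp
  qed
  interpret gs V A B g
  proof
    show "finite V" by fact
    show "B \<subseteq> A" unfolding B_def by auto
    show "\<And>P. P \<in> profiles V A \<Longrightarrow> g P \<in> B" using FP unfolding B_def by auto
    show "\<And>P i r'. P \<in> profiles V A \<Longrightarrow> i \<in> V \<Longrightarrow> r' \<in> lin_orders A \<Longrightarrow> (g P, g (P(i:=r'))) \<in> P i"
      using SPg by blast
    show "\<And>b. b \<in> B \<Longrightarrow> \<exists>P\<in>profiles V A. g P = b"
    proof -
      fix b assume b: "b \<in> B"
      then obtain P where P: "P \<in> profiles V A" "b \<in> F P" using assms(9) unfolding weakly_viable_def B_def by auto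
      then show "\<exists>P\<in>profiles V A. g P = b" using FP[OF P(1)] b unfolding B_def by auto
    qed
    show "\<exists>a b. a \<in> B \<and> b \<in> B \<and> a \<noteq> b" by (rule two)
    show "\<And>a b. a \<in> B \<Longrightarrow> b \<in> B \<Longrightarrow> \<exists>c\<in>B. c \<noteq> a \<and> c \<noteq> b" by (rule third)
  qed
  obtain i where i: "i \<in> V" "\<forall>P\<in>profiles V A. \<forall>y\<in>B. (g P, y) \<in> P i" using dictator by auto
  have "weak_dictator V A F i"
    unfolding weak_dictator_def
  proof (intro conjI ballI)
    show "i \<in> V" by fact
    fix P assume P: "P \<in> profiles V A"
    have R: "P i \<in> lin_orders A" using P i unfolding prof_mem by auto
    have Ane: "A \<noteq> {}" using assms(4) by auto
    obtain t where t: "t = best (P i) A" by auto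
    have tb: "t \<in> A" "\<forall>y\<in>A. (t,y) \<in> P i" using best_ex[OF R assms(3) Ane] t by auto
    show "best (P i) A \<in> F P"
    proof (cases "t = m")
      case True then show ?thesis using t m P by auto
    next
      case False
      then have tB: "t \<in> B" using tb unfolding B_def by auto
      have "(g P, t) \<in> P i" using i(2) P tB by auto
      moreover have "(t, g P) \<in> P i" using tb FP[OF P] by auto
      ultimately have "t = g P" using lin_ordersD(4)[OF R] by auto
      then show ?thesis using FP[OF P] t by auto
    qed
  qed
  then show ?thesis by blast
qed

end
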